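(* Let $3\le k\le n-1$ and $1\le h\le n-k$. Let $S$ be a minimum $h$-cut of $S_{n,k}$ (so $|S|=\kappa_s^{(h)}(S_{n,k})$) and let $X$ be the vertex set of a connected component of $S_{n,k}-S$. Fix $t\in\{2,\dots,k\}$, and for $i\in I_n$ let $Y=V(S_{n,k})\setminus(S\cup X)$, $X_i=X\cap V(S^{t:i}_{n-1,k-1})$, $Y_i=Y\cap V(S^{t:i}_{n-1,k-1})$, $S_i=S\cap V(S^{t:i}_{n-1,k-1})$, and $J=\{i\in I_n: X_i\ne\emptyset\}$, $J'=\{i\in J: Y_i\ne\emptyset\}$, $T=\{i\in I_n: Y_i\ne\emptyset\}$. Then: (a) for every $i\in J'$, $S_i$ is an $(h-1)$-cut of $S^{t:i}_{n-1,k-1}$ (viewed as a copy of $S_{n-1,k-1}$); (b) $\kappa_s^{(h)}(S_{n,k})\ge |J'|\,\kappa_s^{(h-1)}(S_{n-1,k-1})$; (c) $J\cup T=I_n$.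
   Context: For integers $1\le k\le n-1$, let $I_n=\{1,\dots,n\}$ and $P(n,k)$ the set of $k$-permutations $p_1p_2\cdots p_k$ of distinct elements of $I_n$. The $(n,k)$-star graph $S_{n,k}$ has vertex set $P(n,k)$; a vertex $p=p_1p_2\cdots p_k$ is adjacent to (a) each vertex obtained by swapping $p_1$ with $p_i$ for $2\le i\le k$, and (b) each vertex $\alpha p_2\cdots p_k$ with $\alpha\in I_n\setminus\{p_1,\dots,p_k\}$. For $2\le t\le k$ and $i\in I_n$, $S^{t:i}_{n-1,k-1}$ is the subgraph of $S_{n,k}$ induced by all vertices whose $t$-th entry equals $i$; it is isomorphic to $S_{n-1,k-1}$, and each of its vertices has exactly one neighbor outside it. For a connected graph $G$ and integer $h\ge 0$, a set $S\subseteq V(G)$ is an $h$-cut if $G-S$ is disconnected and has minimum degree at least $h$; $\kappa_s^{(h)}(G)$ is the minimum cardinality of an $h$-cut of $G$. *)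

theory Defs
  imports Main
begin

definition reach :: "'a set \<Rightarrow> ('a \<Rightarrow> 'a \<Rightarrow> bool) \<Rightarrow> 'a \<Rightarrow> 'a \<Rightarrow> bool" where
  "reach W E u v \<longleftrightarrow> u \<in> W \<and> v \<in> W \<and> (\<lambda>x y. x \<in> W \<and> y \<in> W \<and> E x y)\<^sup>*\<^sup>* u v"

definition hcut :: "'a set \<Rightarrow> ('a \<Rightarrow> 'a \<Rightarrow> bool) \<Rightarrow> nat \<Rightarrow> 'a set \<Rightarrow> bool" where
  "hcut V E h S \<longleftrightarrow> S \<subseteq> V
     \<and> (\<exists>u\<in>V - S. \<exists>v\<in>V - S. \<not> reach (V - S) E u v)
     \<and> (\<forall>v\<in>V - S. h \<le> card {w \<in> V - S. E v w})"

definition kappa_h :: "'a set \<Rightarrow> ('a \<Rightarrow> 'a \<Rightarrow> bool) \<Rightarrow> nat \<Rightarrow> nat" where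
  "kappa_h V E h = Inf {card S | S. hcut V E h S}"

definition component :: "'a set \<Rightarrow> ('a \<Rightarrow> 'a \<Rightarrow> bool) \<Rightarrow> 'a set \<Rightarrow> 'a set \<Rightarrow> bool" where
  "component V E S X \<longleftrightarrow> (\<exists>x \<in> V - S. X = {y. reach (V - S) E x y})"

text \<open>k-permutations of I_n = {1..n}, as lists; entry p_j is p ! (j-1).\<close>
definition kperms :: "nat \<Rightarrow> nat \<Rightarrow> nat list set" where
  "kperms n k = {p. length p = k \<and> distinct p \<and> set p \<subseteq> {1..n}}"

definition star_adj :: "nat \<Rightarrow> nat \<Rightarrow> nat list \<Rightarrow> nat list \<Rightarrow> bool" where
  "star_adj n k p q \<longleftrightarrow>
     (\<exists>i. 1 \<le> i \<and> i < k \<and> q = p[0 := p ! i, i := p ! 0])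
   \<or> (\<exists>a \<in> {1..n} - set p. q = p[0 := a])"

definition sub_verts :: "nat \<Rightarrow> nat \<Rightarrow> nat \<Rightarrow> nat \<Rightarrow> nat list set" where
  "sub_verts n k t i = {p \<in> kperms n k. p ! (t - 1) = i}"

end

theory Submission
  imports Defs
begin



lemma reach_trans: "reach W E u v \<Longrightarrow> reach W E v w \<Longrightarrow> reach W E u w"
  unfolding reach_def by (meson rtranclp_trans)

lemma reach_mono: "reach W E u v \<Longrightarrow> W \<subseteq> W2 \<Longrightarrow> reach W2 E u v"
proof -
  assume r: "reach W E u v" and s: "W \<subseteq> W2"
  have "(\<lambda>x y. x \<in> W \<and> y \<in> W \<and> E x y)\<^sup>*\<^sup>* u v" using r unfolding reach_def by simp
  hence "(\<lambda>x y. x \<in> W2 \<and> y \<in> W2 \<and> E x y)\<^sup>*\<^sup>* u v"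
    by (rule rtranclp_mono[THEN predicate2D, rotated]) (use s in auto)
  thus ?thesis using r s unfolding reach_def by auto
qed

lemma reach_map:
  assumes "reach W E u v" "\<forall>x\<in>W. g x \<in> W2" "\<forall>x\<in>W. \<forall>y\<in>W. E x y \<longrightarrow> E2 (g x) (g y)"
  shows "reach W2 E2 (g u) (g v)"
proof -
  have uv: "u \<in> W" "v \<in> W" and r: "(\<lambda>x y. x \<in> W \<and> y \<in> W \<and> E x y)\<^sup>*\<^sup>* u v"
    using assms(1) unfolding reach_def by auto
  have "(\<lambda>x y. x \<in> W2 \<and> y \<in> W2 \<and> E2 x y)\<^sup>*\<^sup>* (g u) (g v)"
    using r
  proof (induction rule: rtranclp_induct)
    case base then show ?case by simp
  next
    case (step y z)
    have "g y \<in> W2" "g z \<in> W2" "E2 (g y) (g z)" using step assms(2,3) by auto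
    with step.IH show ?case by (simp add: rtranclp.rtrancl_into_rtrancl)
  qed
  thus ?thesis using uv assms(2) unfolding reach_def by auto
qed

lemma reach_closed:
  assumes "reach W E u v" "u \<in> A" "\<forall>x\<in>A. \<forall>y\<in>W. E x y \<longrightarrow> y \<in> A"
  shows "v \<in> A"
proof -
  have r: "(\<lambda>x y. x \<in> W \<and> y \<in> W \<and> E x y)\<^sup>*\<^sup>* u v"
    using assms(1) unfolding reach_def by auto
  from r show ?thesis
    by (induction rule: rtranclp_induct) (use assms(2,3) in auto)
qed

lemma kappa_le: "hcut V E h S \<Longrightarrow> kappa_h V E h \<le> card S"
  unfolding kappa_h_def by (rule cInf_lower) auto

lemma hcut_transfer:
  assumes hc: "hcut V E h S" and fin: "finite V2"
  and m1: "\<forall>x\<in>V. \<phi> x \<in> V2" and m2: "\<forall>y\<in>V2. \<psi> y \<in> V"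
  and i1: "\<forall>x\<in>V. \<psi> (\<phi> x) = x" and i2: "\<forall>y\<in>V2. \<phi> (\<psi> y) = y"
  and e1: "\<forall>x\<in>V. \<forall>y\<in>V. E x y \<longrightarrow> E2 (\<phi> x) (\<phi> y)"
  and e2: "\<forall>x\<in>V2. \<forall>y\<in>V2. E2 x y \<longrightarrow> E (\<psi> x) (\<psi> y)"
  shows "hcut V2 E2 h (\<phi> ` S) \<and> card (\<phi> ` S) = card S"
proof -
  have SV: "S \<subseteq> V" using hc unfolding hcut_def by auto
  have inj: "inj_on \<phi> V" using i1 by (metis inj_onI)
  have mem: "\<And>x. x \<in> V \<Longrightarrow> \<phi> x \<in> \<phi> ` S \<longleftrightarrow> x \<in> S"
    using inj SV by (auto dest: inj_onD)
  have c: "card (\<phi> ` S) = card S" using inj SV by (meson card_image inj_on_subset)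
  have a1: "\<phi> ` S \<subseteq> V2" using SV m1 by auto
  obtain u v where uv: "u \<in> V - S" "v \<in> V - S" "\<not> reach (V - S) E u v"
    using hc unfolding hcut_def by auto
  have a2: "\<not> reach (V2 - \<phi> ` S) E2 (\<phi> u) (\<phi> v)"
  proof
    assume "reach (V2 - \<phi> ` S) E2 (\<phi> u) (\<phi> v)"
    hence "reach (V - S) E (\<psi> (\<phi> u)) (\<psi> (\<phi> v))"
    proof (rule reach_map)
      show "\<forall>x\<in>V2 - \<phi> ` S. \<psi> x \<in> V - S" using m2 i2 by (metis DiffD1 DiffD2 DiffI image_eqI)
      show "\<forall>x\<in>V2 - \<phi> ` S. \<forall>y\<in>V2 - \<phi> ` S. E2 x y \<longrightarrow> E (\<psi> x) (\<psi> y)" using e2 by auto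
    qed
    thus False using uv i1 by auto
  qed
  have a3: "\<forall>v'\<in>V2 - \<phi> ` S. h \<le> card {w \<in> V2 - \<phi> ` S. E2 v' w}"
  proof
    fix v' assume v': "v' \<in> V2 - \<phi> ` S"
    define x where "x = \<psi> v'"
    have x: "x \<in> V - S" "\<phi> x = v'" using v' m2 i2 x_def by (auto, metis image_eqI)
    have "h \<le> card {w \<in> V - S. E x w}" using hc x unfolding hcut_def by auto
    also have "\<dots> = card (\<phi> ` {w \<in> V - S. E x w})"
      by (rule card_image[symmetric]) (rule inj_on_subset[OF inj], auto)
    also have "\<dots> \<le> card {w \<in> V2 - \<phi> ` S. E2 v' w}"
    proof (rule card_mono)
      show "finite {w \<in> V2 - \<phi> ` S. E2 v' w}" using fin by auto
      show "\<phi> ` {w \<in> V - S. E x w} \<subseteq> {w \<in> V2 - \<phi> ` S. E2 v' w}"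
        using x m1 mem e1 by auto
    qed
    finally show "h \<le> card {w \<in> V2 - \<phi> ` S. E2 v' w}" .
  qed
  show ?thesis unfolding hcut_def using a1 a2 a3 c uv m1 mem by blast
qed




definition idx :: "nat \<Rightarrow> nat \<Rightarrow> nat" where "idx p m = (if m < p then m else Suc m)"
definition fdn :: "nat \<Rightarrow> nat \<Rightarrow> nat" where "fdn i x = (if x < i then x else x - 1)"
definition gup :: "nat \<Rightarrow> nat \<Rightarrow> nat" where "gup i y = (if y < i then y else Suc y)"
definition phi :: "nat \<Rightarrow> nat \<Rightarrow> nat list \<Rightarrow> nat list" where
  "phi p i x = map (\<lambda>m. fdn i (x ! idx p m)) [0..<length x - 1]"
definition psi :: "nat \<Rightarrow> nat \<Rightarrow> nat list \<Rightarrow> nat list" where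
  "psi p i q = map (\<lambda>m. if m = p then i else gup i (q ! (if m < p then m else m - 1))) [0..<Suc (length q)]"

lemma fdn_gup[simp]: "fdn i (gup i y) = y" by (simp add: fdn_def gup_def)
lemma gup_fdn: "x \<noteq> i \<Longrightarrow> gup i (fdn i x) = x" by (auto simp: fdn_def gup_def)
lemma gup_ne[simp]: "gup i y \<noteq> i" by (simp add: gup_def)
lemma gup_ne2[simp]: "i \<noteq> gup i y" by (simp add: gup_def)
lemma gup_inj[simp]: "gup i x = gup i y \<longleftrightarrow> x = y" by (auto simp: gup_def)
lemma fdn_inj: "x \<noteq> i \<Longrightarrow> y \<noteq> i \<Longrightarrow> fdn i x = fdn i y \<longleftrightarrow> x = y"
  by (metis gup_fdn)

lemma length_phi[simp]: "length (phi p i x) = length x - 1" by (simp add: phi_def)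
lemma nth_phi: "m < length x - 1 \<Longrightarrow> phi p i x ! m = fdn i (x ! idx p m)" by (simp add: phi_def)
lemma length_psi[simp]: "length (psi p i q) = Suc (length q)" by (simp add: psi_def)
lemma nth_psi: "m < Suc (length q) \<Longrightarrow> psi p i q ! m = (if m = p then i else gup i (q ! (if m < p then m else m - 1)))"
  by (simp add: psi_def del: upt_Suc)

lemma star_adj_swapI: "1 \<le> j \<Longrightarrow> j < k \<Longrightarrow> y = x[0 := x!j, j := x!0] \<Longrightarrow> star_adj n k x y"
  unfolding star_adj_def by blast
lemma star_adj_repI: "y = x[0:=a] \<Longrightarrow> a \<in> {1..n} - set x \<Longrightarrow> star_adj n k x y"
  unfolding star_adj_def by blast

context
  fixes n k p i :: nat
  assumes p: "1 \<le> p" "p < k" and i: "i \<in> {1..n}"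
begin

definition "Vi = {x \<in> kperms n k. x ! p = i}"

lemma phi_in: assumes x: "x \<in> Vi" shows "phi p i x \<in> kperms (n - 1) (k - 1)"
proof -
  have x1: "length x = k" "distinct x" "set x \<subseteq> {1..n}" "x ! p = i" using x by (auto simp: Vi_def kperms_def)
  have idxl: "\<And>m. m < k - 1 \<Longrightarrow> idx p m < k" using p by (auto simp: idx_def)
  have ne: "\<And>m. m < k - 1 \<Longrightarrow> x ! idx p m \<noteq> i"
  proof
    fix m assume m: "m < k - 1" "x ! idx p m = i"
    hence "idx p m = p" using x1 idxl[OF m(1)] p nth_eq_iff_index_eq by metis
    thus False by (auto simp: idx_def split: if_splits)
  qed
  have "distinct (phi p i x)"
    unfolding distinct_conv_nth
  proof (intro allI impI)
    fix a b assume ab: "a < length (phi p i x)" "b < length (phi p i x)" "a \<noteq> b"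
    hence "idx p a \<noteq> idx p b" by (auto simp: idx_def split: if_splits)
    moreover have "idx p a < length x" "idx p b < length x" using ab x1 idxl by auto
    ultimately have "x ! idx p a \<noteq> x ! idx p b" using x1 by (simp add: nth_eq_iff_index_eq)
    thus "phi p i x ! a \<noteq> phi p i x ! b" using ab x1 ne by (simp add: nth_phi fdn_inj)
  qed
  moreover have "set (phi p i x) \<subseteq> {1..n-1}"
  proof
    fix y assume "y \<in> set (phi p i x)"
    then obtain m where m: "m < k - 1" "y = fdn i (x ! idx p m)" using x1 by (auto simp: in_set_conv_nth nth_phi)
    have "x ! idx p m \<in> {1..n}" using x1 idxl[OF m(1)] by (meson nth_mem subsetD)
    thus "y \<in> {1..n-1}" using ne[OF m(1)] m i by (auto simp: fdn_def)
  qed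
  ultimately show ?thesis using x1 by (simp add: kperms_def)
qed

lemma psi_in: assumes q: "q \<in> kperms (n - 1) (k - 1)" shows "psi p i q \<in> Vi"
proof -
  have q1: "length q = k - 1" "distinct q" "set q \<subseteq> {1..n-1}" using q by (auto simp: kperms_def)
  have L: "length (psi p i q) = k" using q1 p by simp
  have "distinct (psi p i q)"
    unfolding distinct_conv_nth
  proof (intro allI impI)
    fix a b assume ab: "a < length (psi p i q)" "b < length (psi p i q)" "a \<noteq> b"
    show "psi p i q ! a \<noteq> psi p i q ! b"
      using ab q1 p by (auto simp: nth_psi nth_eq_iff_index_eq)
  qed
  moreover have "set (psi p i q) \<subseteq> {1..n}"
  proof
    fix y assume "y \<in> set (psi p i q)"
    then obtain m where m: "m < k" "y = psi p i q ! m" using L by (auto simp: in_set_conv_nth)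
    show "y \<in> {1..n}"
    proof (cases "m = p")
      case True thus ?thesis using m i L by (simp add: nth_psi)
    next
      case False
      define m' where "m' = (if m < p then m else m - 1)"
      have "m' < k - 1" using m False p by (auto simp: m'_def)
      hence "q ! m' \<in> set q" using q1 by simp
      hence "q ! m' \<in> {1..n-1}" using q1(3) by blast
      thus ?thesis using m False L i by (auto simp: nth_psi m'_def[symmetric] gup_def)
    qed
  qed
  moreover have "psi p i q ! p = i" using p q1 by (simp add: nth_psi)
  ultimately show ?thesis using L by (simp add: Vi_def kperms_def)
qed

lemma psi_phi: assumes x: "x \<in> Vi" shows "psi p i (phi p i x) = x"
proof -
  have x1: "length x = k" "distinct x" "x ! p = i" using x by (auto simp: Vi_def kperms_def)
  show ?thesis
  proof (rule nth_equalityI)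
    show "length (psi p i (phi p i x)) = length x" using x1 p by simp
    fix m assume m: "m < length (psi p i (phi p i x))"
    hence mk: "m < k" using x1 p by simp
    show "psi p i (phi p i x) ! m = x ! m"
    proof (cases "m = p")
      case True thus ?thesis using m x1 by (simp add: nth_psi)
    next
      case False
      have "x ! m \<noteq> i" using False x1 mk p nth_eq_iff_index_eq by metis
      moreover have "(if m < p then m else m - 1) < length x - 1" using False mk x1 p by auto
      moreover have "idx p (if m < p then m else m - 1) = m" using False by (auto simp: idx_def)
      ultimately show ?thesis using m False x1 p by (simp add: nth_psi nth_phi gup_fdn)
    qed
  qed
qed

lemma phi_psi: assumes q: "q \<in> kperms (n - 1) (k - 1)" shows "phi p i (psi p i q) = q"
proof -
  have q1: "length q = k - 1" using q by (auto simp: kperms_def)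
  show ?thesis
  proof (rule nth_equalityI)
    show "length (phi p i (psi p i q)) = length q" by simp
    fix m assume m: "m < length (phi p i (psi p i q))"
    have "idx p m < Suc (length q)" "idx p m \<noteq> p" using m by (auto simp: idx_def)
    moreover have "(if idx p m < p then idx p m else idx p m - 1) = m" by (auto simp: idx_def)
    ultimately show "phi p i (psi p i q) ! m = q ! m" using m by (simp add: nth_psi nth_phi)
  qed
qed

lemma phi_adj: assumes x: "x \<in> Vi" and y: "y \<in> Vi" and e: "star_adj n k x y"
  shows "star_adj (n - 1) (k - 1) (phi p i x) (phi p i y)"
proof -
  have x1: "length x = k" "distinct x" "set x \<subseteq> {1..n}" "x ! p = i" using x by (auto simp: Vi_def kperms_def)
  have y1: "y ! p = i" using y by (auto simp: Vi_def)
  from e[unfolded star_adj_def] show ?thesis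
  proof (elim disjE exE bexE conjE)
    fix j assume j: "1 \<le> j" "j < k" "y = x[0 := x ! j, j := x ! 0]"
    have "j \<noteq> p"
    proof
      assume "j = p"
      hence "y ! p = x ! 0" using j x1 by simp
      thus False using y1 x1 p nth_eq_iff_index_eq[of x 0 p] by auto
    qed
    define j' where "j' = (if j < p then j else j - 1)"
    have j': "1 \<le> j'" "j' < k - 1" "idx p j' = j" using j p \<open>j \<noteq> p\<close> by (auto simp: j'_def idx_def)
    have i0: "idx p 0 = 0" using p by (simp add: idx_def)
    have "phi p i y = (phi p i x)[0 := phi p i x ! j', j' := phi p i x ! 0]"
    proof (rule nth_equalityI)
      show "length (phi p i y) = length ((phi p i x)[0 := phi p i x ! j', j' := phi p i x ! 0])"
        using j x1 by simp
      fix m assume m: "m < length (phi p i y)"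
      hence mk: "m < k - 1" "idx p m < k" using j x1 by (auto simp: idx_def)
      have inj: "idx p m = j \<longleftrightarrow> m = j'" "idx p m = 0 \<longleftrightarrow> m = 0" "j = idx p m \<longleftrightarrow> m = j'"
        using j' i0 by (auto simp: idx_def j'_def split: if_splits)
      show "phi p i y ! m = (phi p i x)[0 := phi p i x ! j', j' := phi p i x ! 0] ! m"
        using mk j j' x1 inj i0 by (simp add: nth_phi nth_list_update)
    qed
    thus ?thesis using j' by (intro star_adj_swapI)
  next
    fix a assume a: "a \<in> {1..n} - set x" "y = x[0 := a]"
    have ai: "a \<noteq> i" using a x1 p by (metis DiffD2 nth_mem order.strict_trans1 one_le_numeral  less_imp_le_nat nth_mem)
    have i0: "idx p 0 = 0" using p by (simp add: idx_def)
    have "phi p i y = (phi p i x)[0 := fdn i a]"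
    proof (rule nth_equalityI)
      show "length (phi p i y) = length ((phi p i x)[0 := fdn i a])" using a by simp
      fix m assume m: "m < length (phi p i y)"
      hence mk: "m < k - 1" "idx p m < k" using a x1 by (auto simp: idx_def)
      have inj: "idx p m = 0 \<longleftrightarrow> m = 0" using i0 p by (auto simp: idx_def)
      show "phi p i y ! m = (phi p i x)[0 := fdn i a] ! m"
        using mk a x1 inj i0 by (simp add: nth_phi nth_list_update)
    qed
    moreover have "fdn i a \<in> {1..n-1} - set (phi p i x)"
    proof
      show "fdn i a \<in> {1..n-1}" using a ai i by (auto simp: fdn_def)
      show "fdn i a \<notin> set (phi p i x)"
      proof
        assume "fdn i a \<in> set (phi p i x)"
        then obtain m where m: "m < k - 1" "fdn i a = fdn i (x ! idx p m)"
          using x1 by (auto simp: in_set_conv_nth nth_phi)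
        have mk: "idx p m < k" "idx p m \<noteq> p" using m by (auto simp: idx_def)
        hence "x ! idx p m \<noteq> i" using x1 p nth_eq_iff_index_eq by metis
        hence "a = x ! idx p m" using m ai fdn_inj by metis
        thus False using a mk x1 by auto
      qed
    qed
    ultimately show ?thesis by (intro star_adj_repI)
  qed
qed

lemma psi_adj: assumes x: "x \<in> kperms (n - 1) (k - 1)" and y: "y \<in> kperms (n - 1) (k - 1)"
  and e: "star_adj (n - 1) (k - 1) x y"
  shows "star_adj n k (psi p i x) (psi p i y)"
proof -
  have x1: "length x = k - 1" "distinct x" "set x \<subseteq> {1..n-1}" using x by (auto simp: kperms_def)
  from e[unfolded star_adj_def] show ?thesis
  proof (elim disjE exE bexE conjE)
    fix j' assume j': "1 \<le> j'" "j' < k - 1" "y = x[0 := x ! j', j' := x ! 0]"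
    define j where "j = idx p j'"
    have j: "1 \<le> j" "j < k" "j \<noteq> p" using j' p by (auto simp: j_def idx_def)
    have "psi p i y = (psi p i x)[0 := psi p i x ! j, j := psi p i x ! 0]"
    proof (rule nth_equalityI)
      show "length (psi p i y) = length ((psi p i x)[0 := psi p i x ! j, j := psi p i x ! 0])"
        using j' x1 by simp
      fix m assume m: "m < length (psi p i y)"
      hence mk: "m < k" using j' x1 p by auto
      have jj: "(if j < p then j else j - 1) = j'" using j' by (auto simp: j_def idx_def)
      show "psi p i y ! m = (psi p i (x))[0 := psi p i x ! j, j := psi p i x ! 0] ! m"
        using mk j j' x1 p jj by (auto simp: nth_psi nth_list_update j_def idx_def)
    qed
    thus ?thesis using j by (intro star_adj_swapI)
  next
    fix a assume a: "a \<in> {1..n-1} - set x" "y = x[0 := a]"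
    have "psi p i y = (psi p i x)[0 := gup i a]"
    proof (rule nth_equalityI)
      show "length (psi p i y) = length ((psi p i x)[0 := gup i a])" using a by simp
      fix m assume m: "m < length (psi p i y)"
      hence mk: "m < k" using a x1 p by auto
      show "psi p i y ! m = (psi p i x)[0 := gup i a] ! m"
        using mk a x1 p by (auto simp: nth_psi nth_list_update)
    qed
    moreover have "gup i a \<in> {1..n} - set (psi p i x)"
    proof
      show "gup i a \<in> {1..n}" using a i by (auto simp: gup_def)
      show "gup i a \<notin> set (psi p i x)"
      proof
        assume "gup i a \<in> set (psi p i x)"
        then obtain m where m: "m < k" "gup i a = psi p i x ! m"
          using x1 p by (auto simp: in_set_conv_nth)
        hence "m \<noteq> p" using x1 p by (auto simp: nth_psi)
        hence "a = x ! (if m < p then m else m - 1)" using m x1 p by (auto simp: nth_psi)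
        moreover have "(if m < p then m else m - 1) < length x" using m \<open>m \<noteq> p\<close> x1 p by auto
        ultimately show False using a by auto
      qed
    qed
    ultimately show ?thesis by (intro star_adj_repI)
  qed
qed

end



lemma finite_kperms: "finite (kperms n k)"
proof -
  have "kperms n k \<subseteq> {xs. set xs \<subseteq> {1..n} \<and> length xs = k}" by (auto simp: kperms_def)
  thus ?thesis by (rule finite_subset) (rule finite_lists_length_eq, simp)
qed

lemma kappa_sub:
  assumes p: "1 \<le> p" "p < k" and i: "i \<in> {1..n}"
  and hc: "hcut {x \<in> kperms n k. x ! p = i} (star_adj n k) h' S"
  shows "kappa_h (kperms (n - 1) (k - 1)) (star_adj (n - 1) (k - 1)) h' \<le> card S"
proof -
  note V = Vi_def[OF p i, symmetric]
  have "hcut (kperms (n - 1) (k - 1)) (star_adj (n - 1) (k - 1)) h' (phi p i ` S) \<and> card (phi p i ` S) = card S"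
    apply (rule hcut_transfer[where \<psi> = "psi p i"])
    using hc phi_in[OF p i] psi_in[OF p i] psi_phi[OF p i] phi_psi[OF p i]
      phi_adj[OF p i] psi_adj[OF p i] finite_kperms by (auto simp: V)
  thus ?thesis by (metis kappa_le)
qed




lemma exists_b:
  assumes "1 \<le> p" "p < k" "k \<le> n" "i \<in> {1..n}"
  shows "\<exists>b. length b = k - 1 \<and> distinct b \<and> set b \<subseteq> {1..n} \<and> b ! (p - 1) = i"
proof -
  define L where "L = sorted_list_of_set ({1..n} - {i})"
  have L: "distinct L" "set L = {1..n} - {i}" "length L = n - 1"
    using assms by (auto simp: L_def)
  define c where "c = take (k - 1) (i # L)"
  have c1: "length c = k - 1" using assms L by (simp add: c_def)
  have c2: "distinct c" using L unfolding c_def by (intro distinct_take) simp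
  have c3: "set c \<subseteq> {1..n}" using L assms set_take_subset[of "k - 1" "i # L"] by (auto simp: c_def)
  have c4: "c ! 0 = i" using assms by (simp add: c_def)
  define b where "b = c[0 := c ! (p - 1), p - 1 := c ! 0]"
  have pl: "p - 1 < length c" "0 < length c" using c1 assms by auto
  have "length b = k - 1" using c1 by (simp add: b_def)
  moreover have "distinct b" using c2 pl unfolding b_def by (simp only: distinct_swap)
  moreover have "set b \<subseteq> {1..n}" using c3 pl unfolding b_def by (simp only: set_swap)
  moreover have "b ! (p - 1) = i" using pl c4 by (simp add: b_def)
  ultimately show ?thesis by blast
qed

lemma small_cut:
  assumes k3: "3 \<le> k" and kn: "k \<le> n - 1" and hk: "h \<le> n - k" and p: "1 \<le> p" "p < k"
    and i: "i \<in> {1..n}"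
  shows "\<exists>SA. hcut (kperms n k) (star_adj n k) h SA \<and> card SA < card {x \<in> kperms n k. x ! p = i}"
proof -
  obtain b where b: "length b = k - 1" "distinct b" "set b \<subseteq> {1..n}" "b ! (p - 1) = i"
    using exists_b[OF p(1) p(2) _ i] kn by (metis le_diff_conv le_add1 order_trans)
  define V where "V = kperms n k"
  define E where "E = star_adj n k"
  define R where "R = {1..n} - set b"
  define A where "A = (\<lambda>a. a # b) ` R"
  define SA where "SA = (\<lambda>(m,a). b ! m # b[m := a]) ` ({..<k-1} \<times> R)"
  have finV: "finite V" by (simp add: V_def finite_kperms)
  have finR: "finite R" by (simp add: R_def)
  have cardR: "card R = n - (k - 1)"
    using b by (simp add: R_def card_Diff_subset distinct_card)
  have bR: "\<And>a. a \<in> R \<Longrightarrow> a \<notin> set b" by (simp add: R_def)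
  have Rn: "\<And>a. a \<in> R \<Longrightarrow> a \<in> {1..n}" by (simp add: R_def)
  have bm: "\<And>m. m < k - 1 \<Longrightarrow> b ! m \<in> set b" using b by simp
  have SAV: "SA \<subseteq> V"
  proof
    fix x assume "x \<in> SA"
    then obtain m a where ma: "m < k - 1" "a \<in> R" "x = b ! m # b[m := a]" by (auto simp: SA_def)
    have "a \<noteq> b ! m" using bR[OF ma(2)] bm[OF ma(1)] by auto
    hence "b ! m \<notin> set (b[m := a])" using ma b by (auto simp: set_update_distinct)
    moreover have "distinct (b[m := a])" using ma b bR by (intro distinct_list_update) auto
    moreover have "set (b[m := a]) \<subseteq> {1..n}" using ma b Rn by (intro set_update_subsetI) auto
    moreover have "b ! m \<in> {1..n}" using bm[OF ma(1)] b(3) by blast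
    ultimately show "x \<in> V" using ma b by (auto simp: V_def kperms_def)
  qed
  have bn: "\<forall>x\<in>set b. 1 \<le> x \<and> x \<le> n" using b(3) by auto
  have AV: "A \<subseteq> V" using b bR Rn bn k3 by (auto simp: A_def V_def kperms_def)
  have hSA: "\<And>x. x \<in> SA \<Longrightarrow> x ! 0 \<in> set b" using bm by (auto simp: SA_def)
  have hA: "\<And>x. x \<in> A \<Longrightarrow> x ! 0 \<notin> set b" using bR by (auto simp: A_def)
  have clos: "\<forall>x\<in>A. \<forall>y\<in>V - SA. E x y \<longrightarrow> y \<in> A"
  proof (intro ballI impI)
    fix x y assume x: "x \<in> A" and y: "y \<in> V - SA" and e: "E x y"
    obtain a where a: "a \<in> R" "x = a # b" using x by (auto simp: A_def)
    from e[unfolded E_def star_adj_def] show "y \<in> A"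
    proof (elim disjE exE bexE conjE)
      fix j assume j: "1 \<le> j" "j < k" "y = x[0 := x ! j, j := x ! 0]"
      obtain m where m: "j = Suc m" using j by (cases j) auto
      have "y = b ! m # b[m := a]" using a j m by simp
      hence "y \<in> SA" using a j m b by (auto simp: SA_def)
      thus ?thesis using y by auto
    next
      fix d assume d: "d \<in> {1..n} - set x" "y = x[0 := d]"
      thus ?thesis using a by (auto simp: A_def R_def)
    qed
  qed
  have deg: "\<forall>w\<in>V - SA. h \<le> card {w' \<in> V - SA. E w w'}"
  proof
    fix w assume w: "w \<in> V - SA"
    have w1: "length w = k" "distinct w" "set w \<subseteq> {1..n}" using w by (auto simp: V_def kperms_def)
    define D where "D = {1..n} - set w"
    define Rep where "Rep = (\<lambda>d. w[0 := d]) ` D"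
    define N where "N = {w' \<in> V - SA. E w w'}"
    have finN: "finite N" using finV by (simp add: N_def)
    have cD: "card D = n - k" using w1 by (simp add: D_def card_Diff_subset distinct_card)
    have injR: "inj_on (\<lambda>d. w[0 := d]) D"
    proof (rule inj_onI)
      fix d d' assume "w[0 := d] = w[0 := d']"
      hence "w[0 := d] ! 0 = w[0 := d'] ! 0" by simp
      thus "d = d'" using w1 k3 by simp
    qed
    have cRep: "card Rep = n - k" using injR cD by (simp add: Rep_def card_image)
    have RepV: "\<And>d. d \<in> D \<Longrightarrow> w[0 := d] \<in> V \<and> E w (w[0 := d])"
    proof -
      fix d assume d: "d \<in> D"
      have "distinct (w[0 := d])" using w1 d by (intro distinct_list_update) (auto simp: D_def)
      moreover have "set (w[0 := d]) \<subseteq> {1..n}" using w1 d by (intro set_update_subsetI) (auto simp: D_def)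
      ultimately show "w[0 := d] \<in> V \<and> E w (w[0 := d])" using w1 d
        by (auto simp: V_def kperms_def E_def D_def intro: star_adj_repI)
    qed
    show "h \<le> card N"
    proof (cases "Rep \<inter> SA = {}")
      case True
      hence "Rep \<subseteq> N" using RepV by (auto simp: Rep_def N_def)
      hence "card Rep \<le> card N" using finN by (rule card_mono[rotated])
      thus ?thesis using cRep hk by simp
    next
      case False
      then obtain d0 where d0: "d0 \<in> D" "w[0 := d0] \<in> SA" by (auto simp: Rep_def)
      then obtain m a where ma: "m < k - 1" "a \<in> R" "w[0 := d0] = b ! m # b[m := a]"
        by (auto simp: SA_def)
      have wsplit: "w = w ! 0 # tl w" using w1 k3 by (cases w) auto
      have tlw: "tl w = b[m := a]"
      proof -
        have "tl (w[0 := d0]) = b[m := a]" using ma by simp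
        thus ?thesis using wsplit by (metis list_update_code(2) list.sel(3))
      qed
      have uniq: "Rep \<inter> SA \<subseteq> {w[0 := d0]}"
      proof
        fix z assume z: "z \<in> Rep \<inter> SA"
        then obtain d' where d': "d' \<in> D" "z = w[0 := d']" by (auto simp: Rep_def)
        obtain m' a' where ma': "m' < k - 1" "a' \<in> R" "z = b ! m' # b[m' := a']"
          using z by (auto simp: SA_def)
        have "tl z = tl w" using d' wsplit by (metis list_update_code(2) list.sel(3))
        hence eq: "b[m' := a'] = b[m := a]" using ma' tlw by simp
        have "m' = m"
        proof (rule ccontr)
          assume "m' \<noteq> m"
          hence "b[m' := a'] ! m = b ! m" by simp
          moreover have "b[m := a] ! m = a" using ma b by simp
          ultimately have "a = b ! m" using eq by simp
          thus False using bR[OF ma(2)] bm[OF ma(1)] by simp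
        qed
        hence "z ! 0 = w[0 := d0] ! 0" using ma ma' by simp
        hence "d' = d0" using d' w1 k3 by simp
        thus "z \<in> {w[0 := d0]}" using d' by simp
      qed
      define sw where "sw = w[0 := w ! Suc m, Suc m := w ! 0]"
      have sm: "Suc m < k" using ma by simp
      have wSm: "w ! Suc m = a"
      proof -
        have "w ! Suc m = tl w ! m" using wsplit by (metis nth_Cons_Suc)
        thus ?thesis using tlw ma b by simp
      qed
      have swV: "sw \<in> V" using w1 sm by (auto simp: sw_def V_def kperms_def)
      have swE: "E w sw" unfolding E_def sw_def by (rule star_adj_swapI) (use sm in auto)
      have swSA: "sw \<notin> SA"
      proof
        assume "sw \<in> SA"
        hence "sw ! 0 \<in> set b" by (rule hSA)
        moreover have "sw ! 0 = a" using sm w1 wSm by (simp add: sw_def nth_list_update)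
        ultimately show False using bR[OF ma(2)] by simp
      qed
      have swRep: "sw \<notin> Rep"
      proof
        assume "sw \<in> Rep"
        then obtain d where d: "sw = w[0 := d]" by (auto simp: Rep_def)
        have "sw ! Suc m = w ! 0" using sm w1 by (simp add: sw_def)
        moreover have "w[0 := d] ! Suc m = a" using wSm by simp
        moreover have "w ! 0 \<noteq> w ! Suc m" using w1 sm by (simp add: nth_eq_iff_index_eq)
        ultimately show False using d wSm by simp
      qed
      have sub: "insert sw (Rep - {w[0 := d0]}) \<subseteq> N"
        using swV swE swSA RepV uniq by (auto simp: N_def Rep_def)
      have finRep: "finite Rep" by (simp add: Rep_def D_def)
      have inRep: "w[0 := d0] \<in> Rep" using d0 by (simp add: Rep_def)
      have "card (insert sw (Rep - {w[0 := d0]})) = card Rep"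
        using swRep finRep inRep by (simp add: card_Diff_singleton) (metis card_gt_0_iff empty_iff Suc_pred)
      hence "card Rep \<le> card N" using card_mono[OF finN sub] by simp
      thus ?thesis using cRep hk by simp
    qed
  qed
  have cR2: "2 \<le> card R" using cardR kn k3 by simp
  obtain a0 where a0: "a0 \<in> R" using cR2 by (metis card.empty ex_in_conv not_numeral_le_zero)
  have "card (R - {a0}) \<ge> 1" using cR2 a0 finR by (simp add: card_Diff_singleton)
  then obtain c0 where c0: "c0 \<in> R" "c0 \<noteq> a0" by (metis DiffE card.empty ex_in_conv insertCI not_one_le_zero)
  define m0 where "m0 = (if p - 1 = 0 then 1 else 0::nat)"
  have m0: "m0 < k - 1" "m0 \<noteq> p - 1" using k3 by (auto simp: m0_def)
  define w0 where "w0 = c0 # b[m0 := a0]"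
  have w0V: "w0 \<in> V"
  proof -
    have "distinct (b[m0 := a0])" using b a0 bR by (intro distinct_list_update) auto
    moreover have "c0 \<notin> set (b[m0 := a0])" using c0 bR set_update_subset_insert[of b m0 a0] by auto
    moreover have "set (b[m0 := a0]) \<subseteq> {1..n}" using b a0 Rn by (intro set_update_subsetI) auto
    ultimately show ?thesis using b c0 Rn k3 by (auto simp: w0_def V_def kperms_def)
  qed
  have w0SA: "w0 \<notin> SA" using hSA bR c0 by (force simp: w0_def)
  have w0A: "w0 \<notin> A"
  proof
    assume "w0 \<in> A"
    hence "b[m0 := a0] = b" by (auto simp: A_def w0_def)
    hence "b ! m0 = a0" using m0 b by (metis nth_list_update_eq)
    thus False using bR[OF a0] bm[OF m0(1)] by simp
  qed
  have w0Vi: "w0 ! p = i"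
  proof -
    have "w0 ! p = b[m0 := a0] ! (p - 1)" using p by (simp add: w0_def nth_Cons')
    thus ?thesis using m0 b by simp
  qed
  define u where "u = a0 # b"
  have uA: "u \<in> A" using a0 by (simp add: A_def u_def)
  have uSA: "u \<notin> SA" using hSA hA uA by blast
  have disc: "\<not> reach (V - SA) E u w0"
    using reach_closed[of "V - SA" E u w0 A] clos uA w0A by blast
  have hc: "hcut V E h SA" unfolding hcut_def
    using SAV deg disc uA AV uSA w0V w0SA by blast
  define Vi where "Vi = {x \<in> V. x ! p = i}"
  have finVi: "finite Vi" using finV by (simp add: Vi_def)
  have AVi: "A \<subseteq> Vi" using AV p b by (auto simp: A_def Vi_def nth_Cons')
  have diff: "SA - Vi \<subseteq> (\<lambda>x. i # b[p - 1 := x ! 0]) ` A"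
  proof
    fix e assume e: "e \<in> SA - Vi"
    then obtain m a where ma: "m < k - 1" "a \<in> R" "e = b ! m # b[m := a]" by (auto simp: SA_def)
    have "e ! p \<noteq> i" using e SAV by (auto simp: Vi_def)
    hence "b[m := a] ! (p - 1) \<noteq> i" using ma p by (simp add: nth_Cons')
    hence mp: "m = p - 1" using b by (cases "m = p - 1") auto
    have "e = i # b[p - 1 := (a # b) ! 0]" using ma mp b by simp
    moreover have "a # b \<in> A" using ma by (simp add: A_def)
    ultimately show "e \<in> (\<lambda>x. i # b[p - 1 := x ! 0]) ` A" by blast
  qed
  have finA: "finite A" using finR by (simp add: A_def)
  have finSA: "finite SA" using finR by (simp add: SA_def)
  have c1: "card (SA - Vi) \<le> card A"
    using card_mono[OF _ diff] card_image_le[OF finA] finA by (meson finite_imageI le_trans)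
  have c2: "card SA = card (SA \<inter> Vi) + card (SA - Vi)"
    using card_Un_disjoint[of "SA \<inter> Vi" "SA - Vi"] finSA by (metis Int_Diff_Un Int_Diff_disjoint finite_Diff finite_Int)
  have disj: "(SA \<inter> Vi) \<inter> A = {}" using hSA hA by blast
  have c3: "card ((SA \<inter> Vi) \<union> A) = card (SA \<inter> Vi) + card A"
    using card_Un_disjoint[OF _ finA disj] finSA by simp
  have ps: "(SA \<inter> Vi) \<union> A \<subset> Vi" using AVi w0V w0Vi w0SA w0A by (auto simp: Vi_def)
  have "card ((SA \<inter> Vi) \<union> A) < card Vi" by (rule psubset_card_mono[OF finVi ps])
  hence "card SA < card Vi" using c1 c2 c3 by linarith
  thus ?thesis using hc by (auto simp: V_def E_def Vi_def)
qed




lemma nbr_pos: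
  assumes v: "length v = k" and p: "1 \<le> p" "p < k" and e: "star_adj n k v w"
    and ne: "w \<noteq> v[0 := v ! p, p := v ! 0]"
  shows "w ! p = v ! p"
  using e[unfolded star_adj_def]
proof (elim disjE exE bexE conjE)
  fix j assume j: "1 \<le> j" "j < k" "w = v[0 := v ! j, j := v ! 0]"
  hence "j \<noteq> p" using ne by auto
  thus ?thesis using j p v by (simp add: nth_list_update)
next
  fix a assume "a \<in> {1..n} - set v" "w = v[0 := a]"
  thus ?thesis using p by simp
qed

theorem lemma3p3:
  fixes n k h t :: nat and S X :: "nat list set"
  assumes "3 \<le> k" and "k \<le> n - 1" and "1 \<le> h" and "h \<le> n - k"
    and "hcut (kperms n k) (star_adj n k) h S"
    and "card S = kappa_h (kperms n k) (star_adj n k) h"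
    and "component (kperms n k) (star_adj n k) S X"
    and "2 \<le> t" and "t \<le> k"
  defines "Y \<equiv> kperms n k - (S \<union> X)"
  defines "J \<equiv> {i \<in> {1..n}. X \<inter> sub_verts n k t i \<noteq> {}}"
  defines "J' \<equiv> {i \<in> J. Y \<inter> sub_verts n k t i \<noteq> {}}"
  defines "T \<equiv> {i \<in> {1..n}. Y \<inter> sub_verts n k t i \<noteq> {}}"
  shows "(\<forall>i \<in> J'. hcut (sub_verts n k t i) (star_adj n k) (h - 1) (S \<inter> sub_verts n k t i))
       \<and> kappa_h (kperms n k) (star_adj n k) h
           \<ge> card J' * kappa_h (kperms (n - 1) (k - 1)) (star_adj (n - 1) (k - 1)) (h - 1)
       \<and> J \<union> T = {1..n}"
proof -
  define V where "V = kperms n k"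
  define E where "E = star_adj n k"
  define p where "p = t - 1"
  have p: "1 \<le> p" "p < k" using assms by (auto simp: p_def)
  have subv: "\<And>i. sub_verts n k t i = {x \<in> V. x ! p = i}" by (simp add: sub_verts_def p_def V_def)
  have finV: "finite V" by (simp add: V_def finite_kperms)
  have hc: "hcut V E h S" using assms(5) by (simp add: V_def E_def)
  have SV: "S \<subseteq> V" using hc by (simp add: hcut_def)
  have finS: "finite S" using SV finV finite_subset by blast
  obtain x0 where x0: "x0 \<in> V - S" "X = {y. reach (V - S) E x0 y}"
    using assms(7) by (auto simp: component_def V_def E_def)
  have XVS: "X \<subseteq> V - S" using x0 by (auto simp: reach_def)
  have partA: "\<forall>i\<in>J'. hcut (sub_verts n k t i) E (h - 1) (S \<inter> sub_verts n k t i)"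
  proof
    fix i assume i: "i \<in> J'"
    define Vi where "Vi = sub_verts n k t i"
    have ViV: "Vi \<subseteq> V" by (auto simp: Vi_def subv)
    obtain x y where x: "x \<in> X \<inter> Vi" and y: "y \<in> Y \<inter> Vi"
      using i by (auto simp: J'_def J_def Vi_def)
    have xy: "x \<in> Vi - S \<inter> Vi" "y \<in> Vi - S \<inter> Vi" using x y XVS by (auto simp: Y_def V_def)
    have nr: "\<not> reach (Vi - S \<inter> Vi) E x y"
    proof
      assume "reach (Vi - S \<inter> Vi) E x y"
      hence "reach (V - S) E x y" by (rule reach_mono) (use ViV in auto)
      moreover have "reach (V - S) E x0 x" using x x0 by auto
      ultimately have "reach (V - S) E x0 y" using reach_trans by metis
      hence "y \<in> X" using x0 by simp
      thus False using y by (simp add: Y_def V_def)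
    qed
    have deg: "\<forall>v\<in>Vi - S \<inter> Vi. h - 1 \<le> card {w \<in> Vi - S \<inter> Vi. E v w}"
    proof
      fix v assume v: "v \<in> Vi - S \<inter> Vi"
      have vV: "v \<in> V - S" "v ! p = i" "length v = k" using v ViV by (auto simp: Vi_def subv V_def kperms_def)
      define N where "N = {w \<in> V - S. E v w}"
      define sw where "sw = v[0 := v ! p, p := v ! 0]"
      have "h \<le> card N" using hc vV by (auto simp: hcut_def N_def)
      moreover have "card N - 1 \<le> card (N - {sw})"
        using diff_card_le_card_Diff[of "{sw}" N] by simp
      moreover have "N - {sw} \<subseteq> {w \<in> Vi - S \<inter> Vi. E v w}"
      proof
        fix w assume w: "w \<in> N - {sw}"
        hence "w ! p = v ! p" using nbr_pos[OF vV(3) p] by (auto simp: N_def E_def sw_def)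
        thus "w \<in> {w \<in> Vi - S \<inter> Vi. E v w}" using w vV by (auto simp: N_def Vi_def subv)
      qed
      moreover have "finite {w \<in> Vi - S \<inter> Vi. E v w}" by (rule finite_subset[OF _ finV]) (use ViV in auto)
      ultimately have "card (N - {sw}) \<le> card {w \<in> Vi - S \<inter> Vi. E v w}" "h \<le> card N" "card N - 1 \<le> card (N - {sw})"
        by (simp_all add: card_mono)
      thus "h - 1 \<le> card {w \<in> Vi - S \<inter> Vi. E v w}" by linarith
    qed
    show "hcut (sub_verts n k t i) E (h - 1) (S \<inter> sub_verts n k t i)"
      unfolding hcut_def Vi_def[symmetric]
    proof (intro conjI)
      show "S \<inter> Vi \<subseteq> Vi" by blast
      show "\<exists>u\<in>Vi - S \<inter> Vi. \<exists>v\<in>Vi - S \<inter> Vi. \<not> reach (Vi - S \<inter> Vi) E u v" using xy nr by blast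
    qed (rule deg)
  qed
  define K' where "K' = kappa_h (kperms (n - 1) (k - 1)) (star_adj (n - 1) (k - 1)) (h - 1)"
  have finJ': "finite J'" by (simp add: J'_def J_def)
  have partB: "card J' * K' \<le> card S"
  proof -
    have lb: "\<And>i. i \<in> J' \<Longrightarrow> K' \<le> card (S \<inter> sub_verts n k t i)"
    proof -
      fix i assume i: "i \<in> J'"
      hence iI: "i \<in> {1..n}" by (simp add: J'_def J_def)
      have "hcut {x \<in> kperms n k. x ! p = i} (star_adj n k) (h - 1) (S \<inter> sub_verts n k t i)"
        using partA i by (simp add: subv V_def E_def)
      thus "K' \<le> card (S \<inter> sub_verts n k t i)" unfolding K'_def by (rule kappa_sub[OF p iI])
    qed
    have "card J' * K' \<le> (\<Sum>i\<in>J'. card (S \<inter> sub_verts n k t i))"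
      using sum_bounded_below[of J' K' "\<lambda>i. card (S \<inter> sub_verts n k t i)"] lb by simp
    also have "\<dots> = card (\<Union>i\<in>J'. S \<inter> sub_verts n k t i)"
      by (rule card_UN_disjoint[symmetric]) (use finJ' finS in \<open>auto simp: subv\<close>)
    also have "\<dots> \<le> card S" using finS by (intro card_mono) auto
    finally show ?thesis .
  qed
  have partC: "J \<union> T = {1..n}"
  proof
    show "J \<union> T \<subseteq> {1..n}" by (auto simp: J_def T_def)
    show "{1..n} \<subseteq> J \<union> T"
    proof
      fix i assume i: "i \<in> {1..n}"
      show "i \<in> J \<union> T"
      proof (rule ccontr)
        assume "i \<notin> J \<union> T"
        hence "X \<inter> sub_verts n k t i = {}" "Y \<inter> sub_verts n k t i = {}" using i by (auto simp: J_def T_def)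
        hence sub: "{x \<in> V. x ! p = i} \<subseteq> S" by (auto simp: subv Y_def V_def)
        obtain SA where SA: "hcut V E h SA" "card SA < card {x \<in> V. x ! p = i}"
          using small_cut[OF assms(1,2,4) p i] by (auto simp: V_def E_def)
        have "card {x \<in> V. x ! p = i} \<le> card S" using sub finS by (rule card_mono[rotated])
        moreover have "card S \<le> card SA" using kappa_le[OF SA(1)] assms(6) by (simp add: V_def E_def)
        ultimately show False using SA(2) by simp
      qed
    qed
  qed
  show ?thesis using partA partB partC assms(6) by (simp add: E_def K'_def V_def)
qed


end
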